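(* There exists an invertible $22\times22$ binary matrix such that the corresponding linear kernel has partial distance sequence $(1,2,2,2,2,2,4,4,4,4,4,4,8,8,8,8,8,8,8,12,12,16)$. Consequently $E_{22}\ge\frac1{22}\sum_{i=0}^{21}\log_{22}D_{min}^{(i)}\approx0.50118$.
   Context: A kernel of dimension $\ell$ is a bijection $g:\{0,1\}^\ell\to\{0,1\}^\ell$; a linear kernel is $g({\bf u})={\bf u}G$ over $\mathbb{F}_2$ for an invertible $\ell\times\ell$ binary matrix $G$. ${\bf a}\bullet{\bf b}$ denotes concatenation, $d_H$ Hamming distance. Partial distances: $D_{min}^{(i)}=\min\{d_H(g({\bf w}\bullet 0\bullet{\bf u}),g({\bf w}\bullet 1\bullet {\bf v})) : {\bf w}\in\{0,1\}^i,\ {\bf u},{\bf v}\in\{0,1\}^{\ell-i-1}\}$, $i=0,\dots,\ell-1$; exponent $E(g)=\frac1\ell\sum_{i}\log_\ell D_{min}^{(i)}$; $E_\ell=\max_g E(g)$ over all kernels of dimension $\ell$. *)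

theory Defs
  imports Complex_Main "HOL-Library.Z2"
begin

definition bvecs :: "nat \<Rightarrow> bit list set" where
  "bvecs l = {xs. length xs = l}"

definition hdist :: "bit list \<Rightarrow> bit list \<Rightarrow> nat" where
  "hdist x y = card {i. i < length x \<and> x ! i \<noteq> y ! i}"

definition is_kernel :: "nat \<Rightarrow> (bit list \<Rightarrow> bit list) \<Rightarrow> bool" where
  "is_kernel l g \<longleftrightarrow> bij_betw g (bvecs l) (bvecs l)"

definition mat_invertible :: "nat \<Rightarrow> (nat \<Rightarrow> nat \<Rightarrow> bit) \<Rightarrow> bool" where
  "mat_invertible l G \<longleftrightarrow> (\<exists>H. \<forall>i<l. \<forall>j<l.
      (\<Sum>k<l. G i k * H k j) = (if i = j then 1 else 0) \<and>
      (\<Sum>k<l. H i k * G k j) = (if i = j then 1 else 0))"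

definition lin_kernel :: "nat \<Rightarrow> (nat \<Rightarrow> nat \<Rightarrow> bit) \<Rightarrow> bit list \<Rightarrow> bit list" where
  "lin_kernel l G u = map (\<lambda>j. \<Sum>i<l. u ! i * G i j) [0..<l]"

definition partial_dist :: "nat \<Rightarrow> (bit list \<Rightarrow> bit list) \<Rightarrow> nat \<Rightarrow> nat" where
  "partial_dist l g i = Min {hdist (g (w @ [0] @ u)) (g (w @ [1] @ v)) | w u v.
      length w = i \<and> length u = l - i - 1 \<and> length v = l - i - 1}"

definition kernel_exponent :: "nat \<Rightarrow> (bit list \<Rightarrow> bit list) \<Rightarrow> real" where
  "kernel_exponent l g = (1 / real l) * (\<Sum>i<l. log (real l) (real (partial_dist l g i)))"

text \<open>E_l: maximum exponent over all kernels of dimension l (the set of values is finite).\<close>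
definition E_max :: "nat \<Rightarrow> real" where
  "E_max l = Max {kernel_exponent l g | g. is_kernel l g}"

end

theory Submission
  imports Defs "HOL-Decision_Procs.Approximation_Bounds"
begin

declare mult_bit_eq_and[simp del] add_bit_eq_xor[simp del]

definition R :: "bool list list" where
  "R = [[True,False,False,False,False,False,False,False,False,False,False,False,False,False,False,False,False,False,False,False,False,False],
    [False,False,False,False,False,False,False,False,False,False,False,False,False,False,False,True,False,False,False,False,False,True],
    [False,True,False,False,False,False,False,False,True,False,False,False,False,False,False,False,False,False,False,False,False,False],
    [False,False,True,False,True,False,False,False,False,False,False,False,False,False,False,False,False,False,False,False,False,False],
    [False,False,False,False,False,False,False,False,False,False,False,False,False,False,True,False,False,True,False,False,False,False],
    [False,False,False,False,False,False,False,False,False,True,False,False,True,False,False,False,False,False,False,False,False,False],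
    [True,True,True,False,False,False,False,False,False,False,True,False,False,False,False,False,False,False,False,False,False,False],
    [False,False,False,False,False,False,True,False,False,False,False,False,False,True,True,False,False,False,False,False,True,False],
    [False,False,False,False,True,False,False,False,False,False,False,False,False,True,False,False,False,True,False,False,False,True],
    [True,True,False,False,True,False,False,False,False,False,False,False,False,False,False,False,False,False,False,False,False,True],
    [True,False,False,False,False,False,False,False,False,False,False,True,False,False,False,True,False,False,False,False,True,False],
    [False,False,False,False,False,False,False,False,False,False,False,False,True,True,False,False,False,True,False,False,True,False],
    [False,False,True,True,True,True,False,False,False,False,True,False,False,False,False,False,False,True,True,False,False,True],
    [True,False,False,False,False,True,True,False,False,False,True,False,False,True,False,False,False,False,True,True,False,True],
    [False,False,False,True,True,True,False,False,False,True,False,False,False,True,False,False,False,False,False,True,True,True],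
    [True,False,False,False,False,False,True,False,False,False,False,False,True,False,False,True,True,True,False,True,False,True],
    [True,False,False,True,True,False,False,True,True,False,False,False,False,True,False,False,True,False,False,False,True,False],
    [False,False,False,False,True,False,False,False,False,True,False,True,True,False,True,True,True,True,False,False,False,False],
    [True,True,False,False,False,True,False,False,True,False,False,False,False,True,True,False,True,False,True,False,False,False],
    [False,False,True,False,True,False,True,True,True,False,True,False,False,True,True,True,True,False,False,False,True,True],
    [False,True,False,True,False,True,True,True,True,False,True,True,False,True,True,False,False,False,True,True,False,False],
    [True,False,True,True,True,True,True,True,True,True,False,True,True,False,True,True,True,True,True,False,False,False]]"

definition Rinv :: "bool list list" where
  "Rinv = [[True,False,False,False,False,False,False,False,False,False,False,False,False,False,False,False,False,False,False,False,False,False],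
    [True,False,True,True,True,True,True,False,False,True,False,True,False,False,False,True,True,True,True,False,True,False],
    [True,True,False,False,True,False,True,True,False,False,True,True,True,False,False,True,False,False,False,True,True,False],
    [True,False,False,False,True,False,False,False,True,False,False,True,False,True,False,True,False,True,False,True,False,True],
    [True,True,False,True,True,False,True,True,False,False,True,True,True,False,False,True,False,False,False,True,True,False],
    [True,True,True,False,True,False,False,False,False,True,False,True,True,False,True,False,False,False,True,False,True,True],
    [True,True,True,True,False,False,True,True,False,True,False,True,False,True,False,True,False,False,True,False,False,False],
    [True,False,True,False,True,False,True,True,True,True,True,False,False,True,False,False,True,False,False,True,True,False],
    [True,False,False,True,True,True,True,False,False,True,False,True,False,False,False,True,True,True,True,False,True,False],
    [True,True,True,True,True,True,True,False,False,True,False,False,False,True,False,True,False,False,True,False,False,False],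
    [True,True,True,True,False,True,True,True,False,True,True,False,True,False,False,False,True,True,True,True,False,False],
    [True,True,True,False,False,False,False,True,True,True,False,False,True,True,False,False,False,False,True,True,True,False],
    [True,True,True,True,True,False,True,False,False,True,False,False,False,True,False,True,False,False,True,False,False,False],
    [True,False,True,True,False,False,False,True,False,False,False,False,False,False,False,False,True,True,True,False,False,True],
    [True,False,False,False,False,True,True,True,True,False,False,True,False,False,False,True,False,False,False,False,True,True],
    [True,False,True,False,False,True,False,True,False,False,True,False,True,False,False,False,True,True,True,True,False,False],
    [True,False,False,True,False,False,True,True,True,True,False,True,True,True,False,True,True,False,False,True,False,False],
    [True,False,False,False,True,True,True,True,True,False,False,True,False,False,False,True,False,False,False,False,True,True],
    [True,True,True,False,True,True,False,True,False,False,False,True,False,True,True,False,False,True,True,True,False,True],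
    [True,True,False,True,False,True,False,True,False,True,False,True,True,True,False,True,True,False,False,True,True,True],
    [True,True,False,False,False,True,False,False,True,True,False,False,False,True,False,False,True,True,False,False,True,False],
    [True,True,True,False,False,True,False,True,False,False,True,False,True,False,False,False,True,True,True,True,False,False]]"

definition Hc :: "bool list list" where
  "Hc = [[True,True,True,True,True,True,True,True,True,True,True,True,True,True,True,True,True,True,True,True,True,True],
    [False,True,True,True,False,True,True,True,True,True,False,False,False,True,True,True,True,False,False,False,True,True],
    [False,True,False,False,False,False,False,False,True,True,True,False,False,False,True,True,False,True,True,True,True,True],
    [False,True,True,True,False,False,False,False,False,True,False,True,True,False,False,True,True,True,False,True,False,True],
    [True,True,False,True,True,True,False,False,False,False,False,True,False,True,True,False,False,True,True,True,False,True],
    [True,False,True,True,False,True,False,True,False,False,False,True,False,False,True,True,False,True,True,False,True,True]]"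

definition Dl :: "nat list" where
  "Dl = [1,2,2,2,2,2,4,4,4,4,4,4,8,8,8,8,8,8,8,12,12,16]"

fun dotb :: "bool list \<Rightarrow> bool list \<Rightarrow> bool" where
  "dotb (x#xs) (y#ys) = ((x \<and> y) \<noteq> dotb xs ys)"
| "dotb _ _ = False"

fun xorl :: "bool list \<Rightarrow> bool list \<Rightarrow> bool list" where
  "xorl (a#as) (b#bs) = (a \<noteq> b) # xorl as bs"
| "xorl _ _ = []"

definition cnt :: "bool list \<Rightarrow> nat" where "cnt xs = length (filter id xs)"

fun coset_ok :: "nat \<Rightarrow> bool list \<Rightarrow> bool list list \<Rightarrow> bool" where
  "coset_ok d acc [] = (d \<le> cnt acc)"
| "coset_ok d acc (r#rs) = (coset_ok d acc rs \<and> coset_ok d (xorl acc r) rs)"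

fun comb :: "bool list \<Rightarrow> bool list list \<Rightarrow> (nat \<Rightarrow> bit) \<Rightarrow> bool list" where
  "comb acc [] z = acc"
| "comb acc (r#rs) z = comb (if z 0 = 1 then xorl acc r else acc) rs (\<lambda>i. z (Suc i))"

lemma chk_len: "length R = 22 \<and> list_all (\<lambda>r. length r = 22) R \<and>
   length Rinv = 22 \<and> list_all (\<lambda>r. length r = 22) Rinv \<and> length Hc = 6 \<and> list_all (\<lambda>r. length r = 22) Hc"
  by code_simp

lemma chk_inv1: "list_all (\<lambda>i. list_all (\<lambda>j. dotb (R!i) (map (\<lambda>r. r!j) Rinv) = (i=j)) [0..<22]) [0..<22]"
  by code_simp
lemma chk_inv2: "list_all (\<lambda>i. list_all (\<lambda>j. dotb (Rinv!i) (map (\<lambda>r. r!j) R) = (i=j)) [0..<22]) [0..<22]"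
  by code_simp
lemma chk_par: "list_all (\<lambda>i. \<not> dotb (R!i) (replicate 22 True)) [1..<22]"
  by code_simp
lemma chk_orth: "list_all (\<lambda>h. list_all (\<lambda>i. \<not> dotb (R!i) h) [6..<22]) Hc"
  by code_simp
lemma chk_cols: "list_all (\<lambda>a. list_all (\<lambda>b. a = b \<or> list_ex (\<lambda>h. h!a \<noteq> h!b) Hc) [0..<22]) [0..<22]"
  by code_simp
lemma chk_enum: "list_all (\<lambda>k. coset_ok (Dl!k) (R!k) (drop (Suc k) R)) [12..<22]"
  by code_simp
lemma chk_wt: "list_all (\<lambda>k. cnt (R!k) = Dl!k) [0..<22]"
  by code_simp
lemma chk_D: "list_all (\<lambda>k. Dl!k \<le> (if k = 0 then 1 else if k < 6 then 2 else 4)) [0..<12]"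
  by code_simp



lemma bit_cases_lemma: "(x::bit) = 0 \<or> x = 1" by (cases x) auto

lemma dotb_sum:
  "length a = n \<Longrightarrow> length b = n \<Longrightarrow>
   (\<Sum>j<n. of_bool (a!j) * of_bool (b!j) :: bit) = of_bool (dotb a b)"
proof (induction a b arbitrary: n rule: dotb.induct)
  case (1 x xs y ys)
  then obtain m where n: "n = Suc m" and l: "length xs = m" "length ys = m" by auto
  have "(\<Sum>j<n. of_bool ((x#xs)!j) * of_bool ((y#ys)!j) :: bit) =
        of_bool x * of_bool y + (\<Sum>j<m. of_bool (xs!j) * of_bool (ys!j))"
    unfolding n sum.lessThan_Suc_shift by (simp only: nth_Cons_0 nth_Cons_Suc)
  also have "\<dots> = of_bool x * of_bool y + of_bool (dotb xs ys)" using 1 l by simp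
  also have "\<dots> = of_bool (dotb (x#xs) (y#ys))"
    by (cases x; cases y; cases "dotb xs ys") (simp_all add: add_bit_eq_xor mult_bit_eq_and)
  finally show ?case .
qed auto

lemma of_nat_bit: "(of_nat n :: bit) = of_bool (odd n)"
  by (induction n) (simp_all add: add_bit_eq_xor)

lemma inv_apply:
  fixes A B :: "nat \<Rightarrow> nat \<Rightarrow> 'a::comm_ring_1"
  assumes inv: "\<forall>i<n. \<forall>m<n. (\<Sum>j<n. A i j * B j m) = (if i = m then 1 else 0)" and m: "m < n"
  shows "(\<Sum>j<n. (\<Sum>i<n. y i * A i j) * B j m) = y m"
proof -
  have "(\<Sum>j<n. (\<Sum>i<n. y i * A i j) * B j m) = (\<Sum>j<n. \<Sum>i<n. y i * (A i j * B j m))"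
    by (simp add: sum_distrib_right mult.assoc)
  also have "\<dots> = (\<Sum>i<n. \<Sum>j<n. y i * (A i j * B j m))" by (rule sum.swap)
  also have "\<dots> = (\<Sum>i<n. y i * (\<Sum>j<n. A i j * B j m))" by (simp add: sum_distrib_left)
  also have "\<dots> = (\<Sum>i<n. if i = m then y i else 0)" using inv m by (intro sum.cong) auto
  also have "\<dots> = y m" using m by simp
  finally show ?thesis .
qed

lemma orth_apply:
  fixes A :: "nat \<Rightarrow> nat \<Rightarrow> 'a::comm_ring_1"
  assumes "\<forall>i<n. k \<le> i \<longrightarrow> (\<Sum>j<n. A i j * h j) = 0" and "\<forall>i<k. y i = 0"
  shows "(\<Sum>j<n. (\<Sum>i<n. y i * A i j) * h j) = 0"
proof -
  have "(\<Sum>j<n. (\<Sum>i<n. y i * A i j) * h j) = (\<Sum>j<n. \<Sum>i<n. y i * (A i j * h j))"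
    by (simp add: sum_distrib_right mult.assoc)
  also have "\<dots> = (\<Sum>i<n. \<Sum>j<n. y i * (A i j * h j))" by (rule sum.swap)
  also have "\<dots> = (\<Sum>i<n. y i * (\<Sum>j<n. A i j * h j))" by (simp add: sum_distrib_left)
  also have "\<dots> = 0"
  proof (intro sum.neutral ballI)
    fix i assume i: "i \<in> {..<n}"
    show "y i * (\<Sum>j<n. A i j * h j) = 0"
    proof (cases "k \<le> i")
      case True
      then have "(\<Sum>j<n. A i j * h j) = 0" using assms(1) i by auto
      then show ?thesis by simp
    next
      case False
      then show ?thesis using assms(2) by auto
    qed
  qed
  finally show ?thesis .
qed

lemma sum_support:
  fixes c h :: "nat \<Rightarrow> bit"
  shows "(\<Sum>j<n. c j * h j) = (\<Sum>j\<in>{j. j<n \<and> c j \<noteq> 0}. h j)"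
proof -
  have "(\<Sum>j<n. c j * h j) = (\<Sum>j<n. if c j \<noteq> 0 then h j else 0)"
    by (intro sum.cong refl) (metis bit_not_zero_iff mult_1 mult_zero_left)
  also have "\<dots> = (\<Sum>j\<in>{j\<in>{..<n}. c j \<noteq> 0}. h j)" by (rule sum.inter_filter[symmetric]) simp
  also have "{j\<in>{..<n}. c j \<noteq> 0} = {j. j<n \<and> c j \<noteq> 0}" by auto
  finally show ?thesis .
qed

lemma shift_sum:
  fixes y :: "nat \<Rightarrow> 'a::comm_ring_1"
  assumes "k < n" "\<forall>i<k. y i = 0"
  shows "(\<Sum>i<n. y i * A i) = y k * A k + (\<Sum>i<n - Suc k. y (Suc k + i) * A (Suc k + i))"
  using assms
proof (induction k arbitrary: n y A)
  case 0
  then obtain m where nm: "n = Suc m" by (cases n) auto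
  show ?case by (simp only: nm sum.lessThan_Suc_shift) simp
next
  case (Suc k)
  then obtain m where n: "n = Suc m" by (cases n) auto
  have "(\<Sum>i<n. y i * A i) = (\<Sum>i<m. y (Suc i) * A (Suc i))"
    using Suc.prems unfolding n sum.lessThan_Suc_shift by simp
  also have "\<dots> = y (Suc k) * A (Suc k) + (\<Sum>i<m - Suc k. y (Suc (Suc k) + i) * A (Suc (Suc k) + i))"
    using Suc.IH[of m "\<lambda>i. y (Suc i)" "\<lambda>i. A (Suc i)"] Suc.prems n by simp
  finally show ?case using n by simp
qed

lemma xorl_len: "length (xorl a b) = min (length a) (length b)"
  by (induction a b rule: xorl.induct) auto

lemma xorl_nth: "j < length a \<Longrightarrow> j < length b \<Longrightarrow> xorl a b ! j = (a!j \<noteq> b!j)"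
  by (induction a b arbitrary: j rule: xorl.induct) (auto simp: nth_Cons split: nat.splits)

lemma coset_comb: "coset_ok d acc rs \<Longrightarrow> d \<le> cnt (comb acc rs z)"
  by (induction rs arbitrary: acc z) auto

lemma comb_len: "\<forall>r\<in>set rs. length r = length acc \<Longrightarrow> length (comb acc rs z) = length acc"
  by (induction rs arbitrary: acc z) (auto simp: xorl_len)

lemma comb_nth:
  "\<forall>r\<in>set rs. length r = length acc \<Longrightarrow> j < length acc \<Longrightarrow>
   (of_bool (comb acc rs z ! j) :: bit) = of_bool (acc!j) + (\<Sum>i<length rs. z i * of_bool (rs!i!j))"
proof (induction rs arbitrary: acc z)
  case Nil then show ?case by simp
next
  case (Cons r rs)
  define acc' where "acc' = (if z 0 = 1 then xorl acc r else acc)"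
  have la: "length acc' = length acc" using Cons.prems by (simp add: acc'_def xorl_len)
  have e: "(of_bool (acc'!j) :: bit) = of_bool (acc!j) + z 0 * of_bool (r!j)"
    using Cons.prems bit_cases_lemma[of "z 0"]
    by (auto simp: acc'_def xorl_nth add_bit_eq_xor mult_bit_eq_and)
  have "(of_bool (comb acc (r#rs) z ! j) :: bit) = of_bool (comb acc' rs (\<lambda>i. z (Suc i)) ! j)"
    by (simp add: acc'_def)
  also have "\<dots> = of_bool (acc'!j) + (\<Sum>i<length rs. z (Suc i) * of_bool (rs!i!j))"
    using Cons.IH[of acc' "\<lambda>i. z (Suc i)"] Cons.prems la by simp
  also have "\<dots> = of_bool (acc!j) + (z 0 * of_bool (r!j) + (\<Sum>i<length rs. z (Suc i) * of_bool (rs!i!j)))"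
    unfolding e by (rule add.assoc)
  also have "\<dots> = of_bool (acc!j) + (\<Sum>i<length (r#rs). z i * of_bool ((r#rs)!i!j))"
    by (simp only: length_Cons sum.lessThan_Suc_shift nth_Cons_0 nth_Cons_Suc)
  finally show ?case .
qed

definition Gm :: "nat \<Rightarrow> nat \<Rightarrow> bit" where "Gm i j = of_bool (R!i!j)"
definition Hm :: "nat \<Rightarrow> nat \<Rightarrow> bit" where "Hm i j = of_bool (Rinv!i!j)"
definition cw :: "(nat \<Rightarrow> bit) \<Rightarrow> nat \<Rightarrow> bit" where "cw y j = (\<Sum>i<22. y i * Gm i j)"

lemma lenR: "length R = 22" "i < 22 \<Longrightarrow> length (R!i) = 22"
  and lenRinv: "length Rinv = 22" "i < 22 \<Longrightarrow> length (Rinv!i) = 22"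
  using chk_len by (auto simp: list_all_length)

lemma lenHc: "h \<in> set Hc \<Longrightarrow> length h = 22"
  using chk_len by (simp add: list_all_iff)

lemma GH: "\<forall>i<22. \<forall>m<22. (\<Sum>j<22. Gm i j * Hm j m) = (if i = m then 1 else 0)"
proof (intro allI impI)
  fix i m :: nat assume i: "i < 22" and m: "m < 22"
  have "(\<Sum>j<22. Gm i j * Hm j m) = (\<Sum>j<22. of_bool (R!i!j) * of_bool ((map (\<lambda>r. r!m) Rinv)!j))"
    by (intro sum.cong refl) (simp add: Gm_def Hm_def lenRinv)
  also have "\<dots> = of_bool (dotb (R!i) (map (\<lambda>r. r!m) Rinv))"
    by (rule dotb_sum) (simp_all add: lenR lenRinv i)
  also have "dotb (R!i) (map (\<lambda>r. r!m) Rinv) = (i = m)"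
    using chk_inv1 i m unfolding list_all_iff by simp
  finally show "(\<Sum>j<22. Gm i j * Hm j m) = (if i = m then 1 else 0)" by simp
qed

lemma HG: "\<forall>i<22. \<forall>m<22. (\<Sum>j<22. Hm i j * Gm j m) = (if i = m then 1 else 0)"
proof (intro allI impI)
  fix i m :: nat assume i: "i < 22" and m: "m < 22"
  have "(\<Sum>j<22. Hm i j * Gm j m) = (\<Sum>j<22. of_bool (Rinv!i!j) * of_bool ((map (\<lambda>r. r!m) R)!j))"
    by (intro sum.cong refl) (simp add: Gm_def Hm_def lenR)
  also have "\<dots> = of_bool (dotb (Rinv!i) (map (\<lambda>r. r!m) R))"
    by (rule dotb_sum) (simp_all add: lenR lenRinv i)
  also have "dotb (Rinv!i) (map (\<lambda>r. r!m) R) = (i = m)"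
    using chk_inv2 i m unfolding list_all_iff by simp
  finally show "(\<Sum>j<22. Hm i j * Gm j m) = (if i = m then 1 else 0)" by simp
qed

lemma mat_inv: "mat_invertible 22 Gm"
  unfolding mat_invertible_def using GH HG by blast

lemma cw_nonzero:
  assumes "k < 22" "y k = 1"
  shows "\<exists>j<22. cw y j \<noteq> 0"
proof (rule ccontr)
  assume "\<not> ?thesis"
  then have "\<forall>j<22. cw y j = 0" by auto
  then have "(\<Sum>j<22. cw y j * Hm j k) = 0" by simp
  moreover have "(\<Sum>j<22. cw y j * Hm j k) = y k"
    unfolding cw_def by (rule inv_apply[OF GH assms(1)])
  ultimately show False using assms by simp
qed

abbreviation supp :: "(nat \<Rightarrow> bit) \<Rightarrow> nat set" where
  "supp y \<equiv> {j. j < 22 \<and> cw y j \<noteq> 0}"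

lemma supp_ge1:
  assumes "k < 22" "y k = 1"
  shows "1 \<le> card (supp y)"
proof -
  obtain j where "j < 22" "cw y j \<noteq> 0" using cw_nonzero[of k y] assms by blast
  then have "supp y \<noteq> {}" by auto
  moreover have "finite (supp y)" by simp
  ultimately show ?thesis by (simp add: Suc_le_eq card_gt_0_iff)
qed

lemma supp_even:
  assumes "1 \<le> k" "\<forall>i<k. y i = 0"
  shows "even (card (supp y))"
proof -
  have rowpar: "\<forall>i<22. 1 \<le> i \<longrightarrow> (\<Sum>j<22. Gm i j * 1) = 0"
  proof (intro allI impI)
    fix i :: nat assume i: "i < 22" "1 \<le> i"
    have "\<forall>i\<in>{1..<22}. \<not> dotb (R!i) (replicate 22 True)"
      using chk_par unfolding list_all_iff set_upt .
    then have df: "dotb (R!i) (replicate 22 True) = False" using i by (meson atLeastLessThan_iff)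
    have "(\<Sum>j<22. Gm i j * 1) = (\<Sum>j<22. of_bool (R!i!j) * of_bool ((replicate 22 True)!j))"
      by (intro sum.cong refl) (simp add: Gm_def)
    also have "\<dots> = of_bool (dotb (R!i) (replicate 22 True))"
      by (rule dotb_sum) (simp_all add: lenR i)
    finally show "(\<Sum>j<22. Gm i j * 1) = 0" using df by simp
  qed
  have "(\<Sum>j<22. cw y j * 1) = 0"
    unfolding cw_def
    by (rule orth_apply[of 22 1 Gm "\<lambda>_. 1" y]) (use rowpar assms in auto)
  moreover have "(\<Sum>j<22. cw y j * 1) = (\<Sum>j\<in>supp y. 1)"
    by (rule sum_support)
  ultimately have "(of_nat (card (supp y)) :: bit) = 0" by simp
  then show ?thesis by (simp add: of_nat_bit)
qed

lemma supp_ge4: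
  assumes "6 \<le> k" "k < 22" "y k = 1" "\<forall>i<k. y i = 0"
  shows "4 \<le> card (supp y)"
proof -
  have e: "even (card (supp y))" using supp_even[of k y] assms by simp
  have g1: "1 \<le> card (supp y)" using supp_ge1 assms by simp
  have n2: "card (supp y) \<noteq> 2"
  proof
    assume "card (supp y) = 2"
    then obtain a b where ab: "supp y = {a, b}" "a \<noteq> b" by (auto simp: card_2_iff)
    have ab22: "a < 22" "b < 22" using ab by auto
    have hab: "h!a = h!b" if h: "h \<in> set Hc" for h
    proof -
      have horth: "\<forall>i<22. 6 \<le> i \<longrightarrow> (\<Sum>j<22. Gm i j * of_bool (h!j)) = 0"
      proof (intro allI impI)
        fix i :: nat assume i: "i < 22" "6 \<le> i"
        have "\<forall>h\<in>set Hc. \<forall>i\<in>{6..<22}. \<not> dotb (R!i) h"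
          using chk_orth unfolding list_all_iff set_upt .
        then have df: "dotb (R!i) h = False" using i h by (meson atLeastLessThan_iff)
        have "(\<Sum>j<22. Gm i j * of_bool (h!j)) = of_bool (dotb (R!i) h)"
          unfolding Gm_def by (rule dotb_sum) (simp_all add: lenR lenHc h i)
        then show "(\<Sum>j<22. Gm i j * of_bool (h!j)) = 0" using df by simp
      qed
      have "(\<Sum>j<22. cw y j * of_bool (h!j)) = 0"
        unfolding cw_def
        by (rule orth_apply[of 22 6 Gm "\<lambda>j. of_bool (h!j)" y]) (use horth assms in auto)
      moreover have "(\<Sum>j<22. cw y j * of_bool (h!j)) = (\<Sum>j\<in>supp y. of_bool (h!j))"
        by (rule sum_support)
      moreover have "(\<Sum>j\<in>{a,b}. of_bool (h!j) :: bit) = of_bool (h!a) + of_bool (h!b)"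
        using ab(2) by (subst sum.insert) auto
      ultimately have "(of_bool (h!a) + of_bool (h!b) :: bit) = 0" using ab(1) by metis
      then show ?thesis by (cases "h!a"; cases "h!b") (simp_all add: add_bit_eq_xor)
    qed
    have "a = b \<or> list_ex (\<lambda>h. h!a \<noteq> h!b) Hc"
      using chk_cols ab22 unfolding list_all_iff by simp
    then show False using ab(2) hab by (auto simp: list_ex_iff)
  qed
  have "\<forall>n::nat. even n \<longrightarrow> 1 \<le> n \<longrightarrow> n \<noteq> 2 \<longrightarrow> 4 \<le> n" by presburger
  then show ?thesis using e g1 n2 by blast
qed



lemma supp_enum:
  assumes "12 \<le> k" "k < 22" "y k = 1" "\<forall>i<k. y i = 0"
  shows "Dl!k \<le> card (supp y)"
proof -
  define rs where "rs = drop (Suc k) R"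
  define z where "z = (\<lambda>i. y (Suc k + i))"
  define L where "L = comb (R!k) rs z"
  have lrs: "length rs = 22 - Suc k" by (simp add: rs_def lenR)
  have rsi: "rs!i = R!(Suc k + i)" if "i < length rs" for i
    using that by (simp add: rs_def lenR)
  have rslen: "\<forall>r\<in>set rs. length r = length (R!k)"
  proof
    fix r assume "r \<in> set rs"
    then obtain i where "i < length rs" "r = rs!i" by (auto simp: in_set_conv_nth)
    then show "length r = length (R!k)" using rsi lrs assms(2) by (simp add: lenR)
  qed
  have lL: "length L = 22" unfolding L_def using comb_len[OF rslen] assms(2) by (simp add: lenR)
  have Lj: "L!j = (cw y j \<noteq> 0)" if j: "j < 22" for j
  proof -
    have "(of_bool (L!j) :: bit) = of_bool (R!k!j) + (\<Sum>i<length rs. z i * of_bool (rs!i!j))"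
      unfolding L_def by (rule comb_nth[OF rslen]) (simp add: lenR assms(2) j)
    also have "\<dots> = y k * Gm k j + (\<Sum>i<22 - Suc k. y (Suc k + i) * Gm (Suc k + i) j)"
    proof -
      have s: "(\<Sum>i<length rs. z i * of_bool (rs!i!j)) = (\<Sum>i<22 - Suc k. y (Suc k + i) * Gm (Suc k + i) j)"
        unfolding lrs[symmetric] by (rule sum.cong[OF refl]) (simp add: z_def Gm_def rsi)
      show ?thesis unfolding s assms(3) Gm_def by (simp only: mult_1)
    qed
    also have "\<dots> = cw y j"
      unfolding cw_def by (rule shift_sum[symmetric]) (use assms in auto)
    finally have "(of_bool (L!j) :: bit) = cw y j" .
    then show ?thesis by (cases "L!j") auto
  qed
  have "coset_ok (Dl!k) (R!k) rs"
  proof -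
    have "\<forall>k\<in>{12..<22}. coset_ok (Dl!k) (R!k) (drop (Suc k) R)"
      using chk_enum unfolding list_all_iff set_upt .
    moreover have "k \<in> {12..<22}" using assms(1,2) by simp
    ultimately show ?thesis unfolding rs_def by blast
  qed
  then have "Dl!k \<le> cnt L" unfolding L_def by (rule coset_comb)
  also have "cnt L = card {j. j < length L \<and> L!j}"
    by (simp add: cnt_def length_filter_conv_card)
  also have "{j. j < length L \<and> L!j} = supp y" using Lj lL by auto
  finally show ?thesis .
qed

lemma LB:
  assumes "k < 22" "y k = 1" "\<forall>i<k. y i = 0"
  shows "Dl!k \<le> card (supp y)"
proof (cases "12 \<le> k")
  case True then show ?thesis using supp_enum assms by blast
next
  case False
  have "\<forall>k\<in>{0..<12}. Dl!k \<le> (if k = 0 then 1 else if k < 6 then 2 else 4)"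
    using chk_D unfolding list_all_iff set_upt .
  moreover have "k \<in> {0..<12}" using False by simp
  ultimately have b: "Dl!k \<le> (if k = 0 then 1 else if k < 6 then 2 else 4)" by blast
  have g1: "1 \<le> card (supp y)" using supp_ge1[of k y] assms by blast
  show ?thesis
  proof (cases "k = 0")
    case True then show ?thesis using b g1 by simp
  next
    case k0: False
    show ?thesis
    proof (cases "k < 6")
      case True
      have "even (card (supp y))" using supp_even[of k y] assms k0 by simp
      moreover have "\<forall>n::nat. even n \<longrightarrow> 1 \<le> n \<longrightarrow> 2 \<le> n" by presburger
      ultimately have "2 \<le> card (supp y)" using g1 by blast
      then show ?thesis using b k0 True by simp
    next
      case False
      have "4 \<le> card (supp y)" using supp_ge4[of k y] assms False by simp
      then show ?thesis using b k0 False by simp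
    qed
  qed
qed


lemma lk_len: "length (lin_kernel n G u) = n" by (simp add: lin_kernel_def)
lemma lk_nth: "j < n \<Longrightarrow> lin_kernel n G u ! j = (\<Sum>i<n. u!i * G i j)" by (simp add: lin_kernel_def)

lemma bit_neq_iff: "((x::bit) \<noteq> y) = (x + y \<noteq> 0)"
  by (cases x; cases y) (simp_all add: add_bit_eq_xor)

lemma hdist_pt:
  assumes j: "j < 22"
  shows "(lin_kernel 22 Gm a ! j \<noteq> lin_kernel 22 Gm b ! j) = (cw (\<lambda>i. a!i + b!i) j \<noteq> 0)"
proof -
  have "(lin_kernel 22 Gm a ! j \<noteq> lin_kernel 22 Gm b ! j) =
        ((\<Sum>i<22. a!i * Gm i j) + (\<Sum>i<22. b!i * Gm i j) \<noteq> 0)"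
    unfolding lk_nth[OF j] by (rule bit_neq_iff)
  also have "(\<Sum>i<22. a!i * Gm i j) + (\<Sum>i<22. b!i * Gm i j) = cw (\<lambda>i. a!i + b!i) j"
    by (simp only: cw_def distrib_right sum.distrib)
  finally show ?thesis .
qed

lemma hdist_lk:
  "hdist (lin_kernel 22 Gm a) (lin_kernel 22 Gm b) = card (supp (\<lambda>i. a!i + b!i))"
proof -
  have "{j. j < length (lin_kernel 22 Gm a) \<and> lin_kernel 22 Gm a ! j \<noteq> lin_kernel 22 Gm b ! j}
        = supp (\<lambda>i. a!i + b!i)"
    unfolding lk_len
  proof (rule Collect_cong)
    fix j
    show "(j < 22 \<and> lin_kernel 22 Gm a ! j \<noteq> lin_kernel 22 Gm b ! j) = (j < 22 \<and> cw (\<lambda>i. a!i + b!i) j \<noteq> 0)"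
      using hdist_pt[of j a b] by blast
  qed
  then show ?thesis by (simp only: hdist_def)
qed

lemma row_weight:
  assumes "k < 22"
  shows "card (supp (\<lambda>i. if i = k then 1 else 0)) = Dl!k"
proof -
  have cwk: "cw (\<lambda>i. if i = k then 1 else 0) j = Gm k j" for j
    unfolding cw_def
    by (subst sum.cong[OF refl, of _ _ "\<lambda>i. if i = k then Gm k j else 0"]) (auto simp: assms)
  have "supp (\<lambda>i. if i = k then 1 else 0) = {j. j < length (R!k) \<and> id (R!k!j)}"
    using assms by (auto simp: cwk Gm_def lenR)
  also have "card \<dots> = cnt (R!k)" by (simp add: cnt_def length_filter_conv_card)
  also have "\<dots> = Dl!k"
  proof -
    have "\<forall>k\<in>{0..<22}. cnt (R!k) = Dl!k" using chk_wt unfolding list_all_iff set_upt .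
    then show ?thesis using assms by simp
  qed
  finally show ?thesis .
qed



lemma lnb:
  fixes x :: real
  assumes "0 \<le> x" "x < 1"
  shows "x - x^2/2 + x^3/3 - x^4/4 \<le> ln (x + 1)" "ln (x + 1) \<le> x - x^2/2 + x^3/3 - x^4/4 + x^5/5"
proof -
  have "(\<Sum>i=0..<2*2. (- 1) ^ i * (1 / real (i + 1)) * x ^ (Suc i)) \<le> ln (x + 1)"
    by (rule ln_bounds(1)[OF assms])
  then show "x - x^2/2 + x^3/3 - x^4/4 \<le> ln (x + 1)"
    by (simp add: eval_nat_numeral)
  have "ln (x + 1) \<le> (\<Sum>i=0..<2*2+1. (- 1) ^ i * (1 / real (i + 1)) * x ^ (Suc i))"
    by (rule ln_bounds(2)[OF assms])
  then show "ln (x + 1) \<le> x - x^2/2 + x^3/3 - x^4/4 + x^5/5"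
    by (simp add: eval_nat_numeral)
qed

lemma num_bound:
  "\<bar>(1/22) * ((46 * ln 2 + 2 * ln 3) / ln 22) - (0.50118::real)\<bar> < 0.000005"
proof -
  have a: "ln (10/9::real) = ln 2 + ln 5 - 2 * ln 3"
  proof -
    have "ln (10/9::real) = ln 10 - ln 9" using ln_div[of 10 9] by simp
    moreover have "ln (10::real) = ln 2 + ln 5" using ln_mult[of 2 5] by simp
    moreover have "ln (9::real) = 2 * ln 3" using ln_realpow[of 3 2] by simp
    ultimately show ?thesis by simp
  qed
  have b: "ln (25/24::real) = 2 * ln 5 - 3 * ln 2 - ln 3"
  proof -
    have "ln (25/24::real) = ln 25 - ln 24" using ln_div[of 25 24] by simp
    moreover have "ln (25::real) = 2 * ln 5" using ln_realpow[of 5 2] by simp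
    moreover have "ln (24::real) = ln 8 + ln 3" using ln_mult[of 8 3] by simp
    moreover have "ln (8::real) = 3 * ln 2" using ln_realpow[of 2 3] by simp
    ultimately show ?thesis by simp
  qed
  have c: "ln (81/80::real) = 4 * ln 3 - 4 * ln 2 - ln 5"
  proof -
    have "ln (81/80::real) = ln 81 - ln 80" using ln_div[of 81 80] by simp
    moreover have "ln (81::real) = 4 * ln 3" using ln_realpow[of 3 4] by simp
    moreover have "ln (80::real) = ln 16 + ln 5" using ln_mult[of 16 5] by simp
    moreover have "ln (16::real) = 4 * ln 2" using ln_realpow[of 2 4] by simp
    ultimately show ?thesis by simp
  qed
  have d: "ln (121/120::real) = 2 * ln 11 - 3 * ln 2 - ln 3 - ln 5"
  proof -
    have "ln (121/120::real) = ln 121 - ln 120" using ln_div[of 121 120] by simp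
    moreover have "ln (121::real) = 2 * ln 11" using ln_realpow[of 11 2] by simp
    moreover have "ln (120::real) = ln 24 + ln 5" using ln_mult[of 24 5] by simp
    moreover have "ln (24::real) = ln 8 + ln 3" using ln_mult[of 8 3] by simp
    moreover have "ln (8::real) = 3 * ln 2" using ln_realpow[of 2 3] by simp
    ultimately show ?thesis by simp
  qed
  have e: "ln (22::real) = ln 2 + ln 11" using ln_mult[of 2 11] by simp
  have a1: "(2765/26244::real) \<le> ln (10/9::real)"
  proof -
    have "(1/9 - (1/9)^2/2 + (1/9)^3/3 - (1/9)^4/4::real) = 2765/26244" by (simp add: power_divide)
    then show ?thesis using lnb(1)[of "1/9"] by simp
  qed
  have a2: "ln (10/9::real) \<le> 124429/1180980"
  proof -
    have "(1/9 - (1/9)^2/2 + (1/9)^3/3 - (1/9)^4/4 + (1/9)^5/5::real) = 124429/1180980" by (simp add: power_divide)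
    then show ?thesis using lnb(2)[of "1/9"] by simp
  qed
  have b1: "(54175/1327104::real) \<le> ln (25/24::real)"
  proof -
    have "(1/24 - (1/24)^2/2 + (1/24)^3/3 - (1/24)^4/4::real) = 54175/1327104" by (simp add: power_divide)
    then show ?thesis using lnb(1)[of "1/24"] by simp
  qed
  have b2: "ln (25/24::real) \<le> 1625251/39813120"
  proof -
    have "(1/24 - (1/24)^2/2 + (1/24)^3/3 - (1/24)^4/4 + (1/24)^5/5::real) = 1625251/39813120" by (simp add: power_divide)
    then show ?thesis using lnb(2)[of "1/24"] by simp
  qed
  have c1: "(6105917/491520000::real) \<le> ln (81/80::real)"
  proof -
    have "(1/80 - (1/80)^2/2 + (1/80)^3/3 - (1/80)^4/4::real) = 6105917/491520000" by (simp add: power_divide)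
    then show ?thesis using lnb(1)[of "1/80"] by simp
  qed
  have c2: "ln (81/80::real) \<le> 610591703/49152000000"
  proof -
    have "(1/80 - (1/80)^2/2 + (1/80)^3/3 - (1/80)^4/4 + (1/80)^5/5::real) = 610591703/49152000000" by (simp add: power_divide)
    then show ?thesis using lnb(2)[of "1/80"] by simp
  qed
  have d1: "(2294453/276480000::real) \<le> ln (121/120::real)"
  proof -
    have "(1/120 - (1/120)^2/2 + (1/120)^3/3 - (1/120)^4/4::real) = 2294453/276480000" by (simp add: power_divide)
    then show ?thesis using lnb(1)[of "1/120"] by simp
  qed
  have d2: "ln (121/120::real) \<le> 1032503851/124416000000"
  proof -
    have "(1/120 - (1/120)^2/2 + (1/120)^3/3 - (1/120)^4/4 + (1/120)^5/5::real) = 1032503851/124416000000" by (simp add: power_divide)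
    then show ?thesis using lnb(2)[of "1/120"] by simp
  qed
  have Q: "0 < 22 * ln (22::real)" by simp
  have lo: "(501175/1000000) * (22 * ln 22) < 46 * ln 2 + 2 * ln (3::real)"
    using a b c d e a1 a2 b1 b2 c1 c2 d1 d2 by linarith
  have hi: "46 * ln 2 + 2 * ln (3::real) < (501185/1000000) * (22 * ln 22)"
    using a b c d e a1 a2 b1 b2 c1 c2 d1 d2 by linarith
  define V where "V = (46 * ln 2 + 2 * ln (3::real)) / (22 * ln 22)"
  have eq: "(1/22) * ((46 * ln 2 + 2 * ln 3) / ln 22) = V"
    by (simp add: V_def)
  have h1: "0.501175 < V"
    unfolding V_def using lo Q by (simp add: less_divide_eq)
  have h2: "V < 0.501185"
    unfolding V_def using hi Q by (simp add: divide_less_eq)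
  have k1: "V - 0.50118 < (0.000005::real)" using h2 by simp
  have k2: "- (V - 0.50118) < (0.000005::real)" using h1 by simp
  show ?thesis unfolding eq abs_less_iff using k1 k2 by blast
qed


lemma cw_cong: "(\<And>i. i < 22 \<Longrightarrow> y i = y' i) \<Longrightarrow> cw y j = cw y' j"
  unfolding cw_def by (intro sum.cong) auto

lemma card_supp_le: "card (supp y) \<le> 22"
proof -
  have "card (supp y) \<le> card {..<22::nat}" by (rule card_mono) auto
  then show ?thesis by simp
qed

lemma unit_nth:
  assumes "k < 22" "i < 22"
  shows "(replicate k (0::bit) @ [c] @ replicate (21 - k) 0) ! i = (if i = k then c else 0)"
proof (cases "i < k")
  case True then show ?thesis by (simp add: nth_append)
next
  case False
  then show ?thesis using assms by (auto simp: nth_append nth_Cons split: nat.split)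
qed

lemma pd:
  assumes k: "k < 22"
  shows "partial_dist 22 (lin_kernel 22 Gm) k = Dl!k"
  unfolding partial_dist_def
proof (rule Min_eqI)
  let ?S = "{hdist (lin_kernel 22 Gm (w @ [0] @ u)) (lin_kernel 22 Gm (w @ [1] @ v)) | w u v.
      length w = k \<and> length u = 22 - k - 1 \<and> length v = 22 - k - 1}"
  have "?S \<subseteq> {..22}" using card_supp_le by (auto simp: hdist_lk)
  then show "finite ?S" by (rule finite_subset) simp
  show "Dl!k \<le> y" if "y \<in> ?S" for y
  proof -
    obtain w u v where y: "y = hdist (lin_kernel 22 Gm (w @ [0] @ u)) (lin_kernel 22 Gm (w @ [1] @ v))"
      and lw: "length w = k" using \<open>y \<in> ?S\<close> by blast
    let ?z = "\<lambda>i. (w @ [0] @ u) ! i + (w @ [1] @ v) ! i"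
    have z1: "?z k = 1" using lw by (simp add: nth_append)
    have z0: "\<forall>i<k. ?z i = 0"
    proof (intro allI impI)
      fix i assume "i < k"
      then have "(w @ [0] @ u) ! i = w ! i" "(w @ [1] @ v) ! i = w ! i" using lw by (simp_all add: nth_append)
      then show "?z i = 0" by (cases "w ! i") (simp_all add: add_bit_eq_xor)
    qed
    show ?thesis unfolding y hdist_lk using LB[OF k z1 z0] .
  qed
  let ?a = "replicate k (0::bit) @ [0] @ replicate (21 - k) 0"
  let ?b = "replicate k (0::bit) @ [1] @ replicate (21 - k) 0"
  have "hdist (lin_kernel 22 Gm ?a) (lin_kernel 22 Gm ?b) = card (supp (\<lambda>i. ?a ! i + ?b ! i))"
    by (rule hdist_lk)
  also have "supp (\<lambda>i. ?a ! i + ?b ! i) = supp (\<lambda>i. if i = k then 1 else 0)"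
  proof -
    have "cw (\<lambda>i. ?a ! i + ?b ! i) j = cw (\<lambda>i. if i = k then 1 else 0) j" for j
    proof (rule cw_cong)
      fix i :: nat assume i: "i < 22"
      show "?a ! i + ?b ! i = (if i = k then 1 else 0)"
        using unit_nth[OF k i, of 0] unit_nth[OF k i, of 1] by (simp add: add_bit_eq_xor)
    qed
    then show ?thesis by simp
  qed
  also have "card \<dots> = Dl!k" by (rule row_weight[OF k])
  finally have h: "hdist (lin_kernel 22 Gm ?a) (lin_kernel 22 Gm ?b) = Dl!k" .
  show "Dl!k \<in> ?S"
    apply (rule CollectI)
    apply (rule exI[of _ "replicate k 0"], rule exI[of _ "replicate (21-k) 0"], rule exI[of _ "replicate (21-k) 0"])
    using h by simp
qed

lemma lk_inv_gen:
  assumes inv: "\<forall>i<22. \<forall>m<22. (\<Sum>j<22. A i j * B j m) = (if i = m then 1 else (0::bit))"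
    and lx: "length x = 22"
  shows "lin_kernel 22 B (lin_kernel 22 A x) = x"
proof (rule nth_equalityI)
  show "length (lin_kernel 22 B (lin_kernel 22 A x)) = length x" using lx by (simp add: lk_len)
  fix m assume "m < length (lin_kernel 22 B (lin_kernel 22 A x))"
  then have m: "m < 22" by (simp add: lk_len)
  have "lin_kernel 22 B (lin_kernel 22 A x) ! m = (\<Sum>j<22. (lin_kernel 22 A x)!j * B j m)"
    by (rule lk_nth[OF m])
  also have "\<dots> = (\<Sum>j<22. (\<Sum>i<22. x!i * A i j) * B j m)"
    by (intro sum.cong refl) (simp add: lk_nth)
  also have "\<dots> = x!m" by (rule inv_apply[OF inv m])
  finally show "lin_kernel 22 B (lin_kernel 22 A x) ! m = x ! m" .
qed

lemma is_kern: "is_kernel 22 (lin_kernel 22 Gm)"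
  unfolding is_kernel_def bvecs_def
  by (rule bij_betw_byWitness[where f' = "lin_kernel 22 Hm"])
     (auto simp: lk_len lk_inv_gen[OF GH] lk_inv_gen[OF HG])

lemma hdist_le: "hdist x y \<le> length x"
proof -
  have "hdist x y \<le> card {..<length x}" unfolding hdist_def by (rule card_mono) auto
  then show ?thesis by simp
qed

lemma pd_le:
  assumes g: "is_kernel 22 g" and i: "i < 22"
  shows "partial_dist 22 g i \<le> 22"
proof -
  let ?S = "{hdist (g (w @ [0] @ u)) (g (w @ [1] @ v)) | w u v.
      length w = i \<and> length u = 22 - i - 1 \<and> length v = 22 - i - 1}"
  have gl: "length (g x) = 22" if "length x = 22" for x
  proof -
    have "g ` bvecs 22 = bvecs 22" using g unfolding is_kernel_def bij_betw_def by blast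
    then show ?thesis using that unfolding bvecs_def by blast
  qed
  have sub: "?S \<subseteq> {..22}"
  proof
    fix y assume "y \<in> ?S"
    then obtain w u v where y: "y = hdist (g (w @ [0] @ u)) (g (w @ [1] @ v))"
      and l: "length w = i" "length u = 22 - i - 1" by blast
    have "length (w @ [0] @ u) = 22" using l i by simp
    then show "y \<in> {..22}" using hdist_le[of "g (w @ [0] @ u)"] gl y by fastforce
  qed
  have ne: "?S \<noteq> {}"
  proof -
    have "hdist (g (replicate i 0 @ [0] @ replicate (22 - i - 1) 0)) (g (replicate i 0 @ [1] @ replicate (22 - i - 1) 0)) \<in> ?S"
      apply (rule CollectI)
      apply (rule exI[of _ "replicate i 0"], rule exI[of _ "replicate (22 - i - 1) 0"], rule exI[of _ "replicate (22 - i - 1) 0"])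
      by simp
    then show ?thesis by blast
  qed
  have "finite ?S" using sub by (rule finite_subset) simp
  then have "Min ?S \<in> ?S" using ne by (rule Min_in)
  then show ?thesis unfolding partial_dist_def using sub by blast
qed

lemma Emax_ge: "kernel_exponent 22 (lin_kernel 22 Gm) \<le> E_max 22"
proof -
  let ?K = "{kernel_exponent 22 g | g. is_kernel 22 g}"
  let ?F = "\<lambda>xs. (1 / real 22) * (\<Sum>i<22. log (real 22) (real (xs ! i)))"
  have "?K \<subseteq> ?F ` {xs. set xs \<subseteq> {..22} \<and> length xs = 22}"
  proof
    fix e assume "e \<in> ?K"
    then obtain g where e: "e = kernel_exponent 22 g" and g: "is_kernel 22 g" by blast
    let ?xs = "map (partial_dist 22 g) [0..<22]"
    have "set ?xs \<subseteq> {..22}" using pd_le[OF g] by auto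
    moreover have "e = ?F ?xs" unfolding e kernel_exponent_def by (intro arg_cong2[where f="(*)"] sum.cong) auto
    ultimately show "e \<in> ?F ` {xs. set xs \<subseteq> {..22} \<and> length xs = 22}"
      by (intro image_eqI[of e ?F ?xs]) auto
  qed
  moreover have "finite (?F ` {xs. set xs \<subseteq> {..22} \<and> length xs = 22})"
    by (intro finite_imageI finite_lists_length_eq) simp
  ultimately have "finite ?K" by (rule finite_subset)
  moreover have "kernel_exponent 22 (lin_kernel 22 Gm) \<in> ?K" using is_kern by blast
  ultimately show ?thesis unfolding E_max_def by (rule Max_ge)
qed

lemma sum_logs: "(\<Sum>i<22. log 22 (real (partial_dist 22 (lin_kernel 22 Gm) i))) = (46 * ln 2 + 2 * ln 3) / ln 22"
proof -
  have "(\<Sum>i<22. log 22 (real (partial_dist 22 (lin_kernel 22 Gm) i))) = (\<Sum>i<22. ln (real (Dl!i)) / ln 22)"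
    by (intro sum.cong refl) (simp add: pd log_def)
  also have "\<dots> = (\<Sum>i<22. ln (real (Dl!i))) / ln 22" by (simp add: sum_divide_distrib)
  also have "(\<Sum>i<22. ln (real (Dl!i))) = sum_list (map (\<lambda>x. ln (real x)) Dl)"
  proof -
    have lD: "length Dl = 22" by (simp add: Dl_def)
    show ?thesis unfolding sum_list_sum_nth length_map lD atLeast0LessThan
      by (intro sum.cong refl) (simp add: lD)
  qed
  also have "\<dots> = 46 * ln 2 + 2 * ln 3"
  proof -
    have l4: "ln (4::real) = 2 * ln 2" using ln_realpow[of 2 2] by simp
    have l8: "ln (8::real) = 3 * ln 2" using ln_realpow[of 2 3] by simp
    have l16: "ln (16::real) = 4 * ln 2" using ln_realpow[of 2 4] by simp
    have l12: "ln (12::real) = ln 4 + ln 3" using ln_mult[of 4 3] by simp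
    show ?thesis unfolding Dl_def using l4 l8 l16 l12 by simp
  qed
  finally show ?thesis .
qed

theorem mainTheorem15:
  shows "\<exists>G. mat_invertible 22 G \<and>
    map (partial_dist 22 (lin_kernel 22 G)) [0..<22] =
      [1,2,2,2,2,2,4,4,4,4,4,4,8,8,8,8,8,8,8,12,12,16] \<and>
    E_max 22 \<ge> (1 / 22) * (\<Sum>i<22. log 22 (real (partial_dist 22 (lin_kernel 22 G) i))) \<and>
    \<bar>(1 / 22) * (\<Sum>i<22. log 22 (real (partial_dist 22 (lin_kernel 22 G) i))) - 0.50118\<bar> < 0.000005"
proof (intro exI conjI)
  show "mat_invertible 22 Gm" by (rule mat_inv)
  have "map (partial_dist 22 (lin_kernel 22 Gm)) [0..<22] = Dl"
    by (rule nth_equalityI) (simp_all add: pd Dl_def[symmetric], simp add: Dl_def)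
  then show "map (partial_dist 22 (lin_kernel 22 Gm)) [0..<22] =
      [1,2,2,2,2,2,4,4,4,4,4,4,8,8,8,8,8,8,8,12,12,16]" by (simp add: Dl_def)
  show "E_max 22 \<ge> (1 / 22) * (\<Sum>i<22. log 22 (real (partial_dist 22 (lin_kernel 22 Gm) i)))"
    using Emax_ge unfolding kernel_exponent_def by simp
  show "\<bar>(1 / 22) * (\<Sum>i<22. log 22 (real (partial_dist 22 (lin_kernel 22 Gm) i))) - 0.50118\<bar> < 0.000005"
    unfolding sum_logs by (rule num_bound)
qed

end
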